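(* Let $R$ be a commutative Noetherian ring with unity, $\lambda$ a length function on $R$-modules, $T$ a finitely generated commutative $R$-algebra, $M$ a $T$-module, and $M_0\le M$ an $R$-submodule which is finitely generated as an $R$-module, with $\lambda(M_0)<\infty$ and $TM_0=M$. Let $\bar\gamma\in T^k$ and $\bar\delta\in T^{k'}$ be two tuples of generators of $T$ as an $R$-algebra. Then the Hilbert polynomials $q_{\bar\gamma}$ and $q_{\bar\delta}$ of $M_0$ with respect to $\bar\gamma$ and $\bar\delta$ have the same degree; i.e. $\langle M;\bar\gamma\rangle$ and $\langle M;\bar\delta\rangle$ have the same $\lambda$-dimension.
   Context: A length function on $R$-modules is a function $\lambda$ from $R$-modules to $\mathbb{R}_{\ge0}\cup\{\infty\}$ with $\lambda(0)=0$, invariant under isomorphism, additive on short exact sequences, and with $\lambda(N)=\sup\{\lambda(N'):N'\le N$ finitely generated$\}$. For a tuple $\bar\gamma=(\gamma_1,\dots,\gamma_k)$ generating $T$, let $\phi:R[x_1,\dots,x_k]\to T$ be the surjective $R$-algebra homomorphism with $x_i\mapsto\gamma_i$; $\langle M;\bar\gamma\rangle$ is $M$ viewed as an $R[x_1,\dots,x_k]$-module via $\phi$. Let $T_n=\phi(S_n)$ where $S_n$ is the set of polynomials of total degree $\le n$. Then there is a polynomial $q_{\bar\gamma}\in\mathbb{R}[t]$ with $\lambda(T_nM_0)=q_{\bar\gamma}(n)$ for all large $n$; the $\lambda$-dimension of $\langle M;\bar\gamma\rangle$ is the degree of its leading term. *)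

theory Defs
  imports Complex_Main "HOL-Library.Extended_Real" "HOL-Computational_Algebra.Polynomial"
begin

text \<open>Ring homomorphism between (types of) commutative rings with unity:
  this is the structure map making T an R-algebra.\<close>
definition ring_hom_fun :: "('r::comm_ring_1 \<Rightarrow> 't::comm_ring_1) \<Rightarrow> bool" where
  "ring_hom_fun \<phi> \<longleftrightarrow> \<phi> 1 = 1 \<and> (\<forall>a b. \<phi> (a + b) = \<phi> a + \<phi> b) \<and> (\<forall>a b. \<phi> (a * b) = \<phi> a * \<phi> b)"

definition noetherian_ring :: "'r::comm_ring_1 itself \<Rightarrow> bool" where
  "noetherian_ring _ \<longleftrightarrow>
     (\<forall>I::'r set. module.subspace (*) I \<longrightarrow> (\<exists>F. finite F \<and> I = module.span (*) F))"

definition rscale :: "('r \<Rightarrow> 't) \<Rightarrow> ('t \<Rightarrow> 'm \<Rightarrow> 'm) \<Rightarrow> 'r \<Rightarrow> 'm \<Rightarrow> 'm" where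
  "rscale \<phi> sm r x = sm (\<phi> r) x"

definition Rsub :: "('r::comm_ring_1 \<Rightarrow> 't) \<Rightarrow> ('t \<Rightarrow> 'm::ab_group_add \<Rightarrow> 'm) \<Rightarrow> 'm set \<Rightarrow> bool" where
  "Rsub \<phi> sm N \<longleftrightarrow> module.subspace (rscale \<phi> sm) N"

definition Rspan :: "('r::comm_ring_1 \<Rightarrow> 't) \<Rightarrow> ('t \<Rightarrow> 'm::ab_group_add \<Rightarrow> 'm) \<Rightarrow> 'm set \<Rightarrow> 'm set" where
  "Rspan \<phi> sm S = module.span (rscale \<phi> sm) S"

text \<open>A length function, evaluated on the subquotients N/N' (N' \<subseteq> N R-submodules of M):
  lam N N' stands for \<lambda>(N/N').  Axioms: values in [0,\<infinity>], \<lambda>(0) = 0, invariance under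
  isomorphism of subquotients, additivity on short exact sequences (chains N'' \<subseteq> N' \<subseteq> N,
  which together with isomorphism invariance gives additivity on all short exact sequences
  of subquotients), and \<lambda>(N/N') = sup of \<lambda> over finitely generated submodules of N/N'.\<close>
definition length_function :: "('r::comm_ring_1 \<Rightarrow> 't::comm_ring_1) \<Rightarrow> ('t \<Rightarrow> 'm::ab_group_add \<Rightarrow> 'm)
    \<Rightarrow> ('m set \<Rightarrow> 'm set \<Rightarrow> ereal) \<Rightarrow> bool" where
  "length_function \<phi> sm lam \<longleftrightarrow>
     lam {0} {0} = 0
   \<and> (\<forall>N N'. Rsub \<phi> sm N \<and> Rsub \<phi> sm N' \<and> N' \<subseteq> N \<longrightarrow> 0 \<le> lam N N')
   \<and> (\<forall>N N' P P' (f::'m \<Rightarrow> 'm).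
        Rsub \<phi> sm N \<and> Rsub \<phi> sm N' \<and> N' \<subseteq> N \<and> Rsub \<phi> sm P \<and> Rsub \<phi> sm P' \<and> P' \<subseteq> P
        \<and> (\<forall>x\<in>N. \<forall>y\<in>N. f (x + y) = f x + f y)
        \<and> (\<forall>r. \<forall>x\<in>N. f (rscale \<phi> sm r x) = rscale \<phi> sm r (f x))
        \<and> f ` N \<subseteq> P
        \<and> (\<forall>x\<in>N. f x \<in> P' \<longleftrightarrow> x \<in> N')
        \<and> (\<forall>z\<in>P. \<exists>x\<in>N. \<exists>y\<in>P'. z = f x + y)
        \<longrightarrow> lam N N' = lam P P')
   \<and> (\<forall>N N' N''. Rsub \<phi> sm N \<and> Rsub \<phi> sm N' \<and> Rsub \<phi> sm N'' \<and> N'' \<subseteq> N' \<and> N' \<subseteq> N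
        \<longrightarrow> lam N N'' = lam N N' + lam N' N'')
   \<and> (\<forall>N N'. Rsub \<phi> sm N \<and> Rsub \<phi> sm N' \<and> N' \<subseteq> N \<longrightarrow>
        lam N N' = (SUP F\<in>{F. finite F \<and> F \<subseteq> N}. lam (Rspan \<phi> sm (F \<union> N')) N'))"

definition monomials_le :: "(nat \<Rightarrow> 't::comm_ring_1) \<Rightarrow> nat \<Rightarrow> nat \<Rightarrow> 't set" where
  "monomials_le \<gamma> k n = {(\<Prod>i<k. \<gamma> i ^ \<alpha> i) | \<alpha>. (\<Sum>i<k. \<alpha> i) \<le> n}"

text \<open>T_n = \<phi>(S_n): values at \<gamma> of R-polynomials of total degree \<le> n (the R-span of
  the monomials of degree \<le> n, R acting on T through \<phi>).\<close>
definition Tdeg :: "('r::comm_ring_1 \<Rightarrow> 't::comm_ring_1) \<Rightarrow> (nat \<Rightarrow> 't) \<Rightarrow> nat \<Rightarrow> nat \<Rightarrow> 't set" where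
  "Tdeg \<phi> \<gamma> k n = module.span (\<lambda>r t. \<phi> r * t) (monomials_le \<gamma> k n)"

definition generates_algebra :: "('r::comm_ring_1 \<Rightarrow> 't::comm_ring_1) \<Rightarrow> (nat \<Rightarrow> 't) \<Rightarrow> nat \<Rightarrow> bool" where
  "generates_algebra \<phi> \<gamma> k \<longleftrightarrow> (\<Union>n. Tdeg \<phi> \<gamma> k n) = UNIV"

definition TnM0 :: "('r::comm_ring_1 \<Rightarrow> 't::comm_ring_1) \<Rightarrow> ('t \<Rightarrow> 'm::ab_group_add \<Rightarrow> 'm)
    \<Rightarrow> (nat \<Rightarrow> 't) \<Rightarrow> nat \<Rightarrow> 'm set \<Rightarrow> nat \<Rightarrow> 'm set" where
  "TnM0 \<phi> sm \<gamma> k M0 n = Rspan \<phi> sm {sm t x | t x. t \<in> Tdeg \<phi> \<gamma> k n \<and> x \<in> M0}"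

end

theory Submission
  imports Defs
begin


lemma poly_div_pow_lim:
  fixes p :: "real poly"
  assumes "degree p \<le> D"
  shows "(\<lambda>n. poly p (real n) / real n ^ D) \<longlonglongrightarrow> coeff p D"
proof -
  have eq: "poly p x = (\<Sum>i\<le>D. coeff p i * x ^ i)" for x :: real
    unfolding poly_altdef
    by (rule sum.mono_neutral_left) (use assms in \<open>auto simp: coeff_eq_0\<close>)
  have ev: "eventually (\<lambda>n. (\<Sum>i\<le>D. coeff p i / real n ^ (D - i)) = poly p (real n) / real n ^ D) sequentially"
    using eventually_gt_at_top[of "0::nat"]
  proof eventually_elim
    case (elim n)
    have "poly p (real n) / real n ^ D = (\<Sum>i\<le>D. coeff p i * real n ^ i / real n ^ D)"
      by (simp add: eq sum_divide_distrib)
    also have "\<dots> = (\<Sum>i\<le>D. coeff p i / real n ^ (D - i))"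
    proof (rule sum.cong)
      fix i assume "i \<in> {..D}"
      then have "real n ^ D = real n ^ i * real n ^ (D - i)"
        by (simp add: power_add[symmetric])
      then show "coeff p i * real n ^ i / real n ^ D = coeff p i / real n ^ (D - i)"
        using elim by (simp add: field_simps)
    qed simp
    finally show ?case by simp
  qed
  have lim: "(\<lambda>n. \<Sum>i\<le>D. coeff p i / real n ^ (D - i)) \<longlonglongrightarrow> (\<Sum>i\<le>D. if i = D then coeff p i else 0)"
  proof (rule tendsto_sum)
    fix i assume i: "i \<in> {..D}"
    show "(\<lambda>n. coeff p i / real n ^ (D - i)) \<longlonglongrightarrow> (if i = D then coeff p i else 0)"
    proof (cases "i = D")
      case True then show ?thesis by simp
    next
      case False
      then have "D - i > 0" using i by auto
      have "(\<lambda>n. coeff p i * (inverse (real n)) ^ (D - i)) \<longlonglongrightarrow> coeff p i * 0 ^ (D - i)"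
        by (intro tendsto_intros tendsto_inverse_0_at_top[OF filterlim_real_sequentially])
      moreover have "(0::real) ^ (D - i) = 0" using \<open>D - i > 0\<close> by simp
      ultimately show ?thesis using False
        by (simp add: power_inverse divide_inverse)
    qed
  qed
  have "(\<Sum>i\<le>D. if i = D then coeff p i else 0) = coeff p D" by simp
  with lim ev show ?thesis using Lim_transform_eventually by fastforce
qed

lemma deg_le_poly:
  fixes p q :: "real poly" and d :: nat
  assumes d: "d \<ge> 1"
    and ev: "eventually (\<lambda>n. 0 \<le> poly q (real n) \<and> poly q (real n) \<le> poly p (real (d*n))) sequentially"
  shows "degree q \<le> degree p"
proof (rule ccontr)
  assume "\<not> ?thesis"
  then have lt: "degree p < degree q" by simp
  define D where "D = degree q"
  have qnz: "lead_coeff q \<noteq> 0" using lt by auto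
  have A: "(\<lambda>n. poly q (real n) / real n ^ D) \<longlonglongrightarrow> lead_coeff q"
    using poly_div_pow_lim[of q D] by (simp add: D_def)
  have B0: "(\<lambda>n. poly p (real n) / real n ^ D) \<longlonglongrightarrow> 0"
    using poly_div_pow_lim[of p D] lt by (simp add: D_def coeff_eq_0)
  have sm: "strict_mono (\<lambda>n::nat. d * n)" using d by (auto simp: strict_mono_def)
  have B1: "(\<lambda>n. poly p (real (d*n)) / real (d*n) ^ D) \<longlonglongrightarrow> 0"
    using LIMSEQ_subseq_LIMSEQ[OF B0 sm] by (simp add: o_def)
  have B2: "(\<lambda>n. poly p (real (d*n)) / real (d*n) ^ D * real d ^ D) \<longlonglongrightarrow> 0 * real d ^ D"
    by (intro tendsto_intros B1)
  have eqf: "poly p (real (d*n)) / real (d*n) ^ D * real d ^ D = poly p (real (d*n)) / real n ^ D" for n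
  proof (cases "n = 0")
    case True then show ?thesis by (cases D) auto
  next
    case False then show ?thesis using d by (simp add: power_mult_distrib field_simps)
  qed
  have C: "(\<lambda>n. poly p (real (d*n)) / real n ^ D) \<longlonglongrightarrow> 0"
    using B2 unfolding eqf by simp
  have le1: "lead_coeff q \<le> 0"
  proof (rule tendsto_le[OF _ C A])
    show "eventually (\<lambda>n. poly q (real n) / real n ^ D \<le> poly p (real (d*n)) / real n ^ D) sequentially"
      using ev by eventually_elim (simp add: divide_right_mono)
  qed simp
  have le2: "0 \<le> lead_coeff q"
  proof (rule tendsto_le[OF _ A tendsto_const])
    show "eventually (\<lambda>n. 0 \<le> poly q (real n) / real n ^ D) sequentially"
      using ev by eventually_elim simp
  qed simp
  from le1 le2 qnz show False by simp
qed



lemma modSc: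
  assumes "ring_hom_fun \<phi>"
  shows "module (\<lambda>r (t::'t::comm_ring_1). (\<phi>::'r::comm_ring_1 \<Rightarrow> 't) r * t)"
  using assms unfolding ring_hom_fun_def
  by unfold_locales (auto simp: algebra_simps)

lemma modR:
  assumes "ring_hom_fun \<phi>" "module sm"
  shows "module (rscale (\<phi>::'r::comm_ring_1 \<Rightarrow> 't::comm_ring_1) (sm :: 't \<Rightarrow> 'm::ab_group_add \<Rightarrow> 'm))"
proof -
  interpret M: module sm by fact
  show ?thesis using assms(1) unfolding ring_hom_fun_def rscale_def
    by unfold_locales (auto simp: M.scale_right_distrib M.scale_left_distrib)
qed

lemma span_mult:
  fixes \<phi> :: "'r::comm_ring_1 \<Rightarrow> 't::comm_ring_1"
  assumes hom: "ring_hom_fun \<phi>"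
    and x: "x \<in> module.span (\<lambda>r t. \<phi> r * t) A"
    and y: "y \<in> module.span (\<lambda>r t. \<phi> r * t) B"
    and AB: "\<And>a b. a \<in> A \<Longrightarrow> b \<in> B \<Longrightarrow> a * b \<in> module.span (\<lambda>r t. \<phi> r * t) C"
  shows "x * y \<in> module.span (\<lambda>r t. \<phi> r * t) C"
proof -
  interpret S: module "\<lambda>r t. \<phi> r * t" by (rule modSc[OF hom])
  have step1: "a * y' \<in> S.span C" if a: "a \<in> A" and y': "y' \<in> S.span B" for a y'
  proof -
    have "S.span B \<subseteq> {z. a * z \<in> S.span C}"
    proof (rule S.span_minimal)
      show "B \<subseteq> {z. a * z \<in> S.span C}" using AB a by auto
      show "S.subspace {z. a * z \<in> S.span C}"
      proof (rule S.subspaceI)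
        show "0 \<in> {z. a * z \<in> S.span C}" by (simp add: S.span_zero)
        show "x + z \<in> {z. a * z \<in> S.span C}" if "x \<in> {z. a * z \<in> S.span C}" "z \<in> {z. a * z \<in> S.span C}" for x z
          using that by (simp add: distrib_left S.span_add)
        show "\<phi> c * x \<in> {z. a * z \<in> S.span C}" if "x \<in> {z. a * z \<in> S.span C}" for c x
          using that S.span_scale[of "a * x" C c] by (simp add: mult.left_commute)
      qed
    qed
    with y' show ?thesis by auto
  qed
  have "S.span A \<subseteq> {z. z * y \<in> S.span C}"
  proof (rule S.span_minimal)
    show "A \<subseteq> {z. z * y \<in> S.span C}" using step1 y by auto
    show "S.subspace {z. z * y \<in> S.span C}"
      by (rule S.subspaceI) (auto simp: distrib_right mult.assoc intro: S.span_zero S.span_add S.span_scale)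
  qed
  with x show ?thesis by auto
qed

lemma Tdeg_mult:
  assumes hom: "ring_hom_fun \<phi>"
    and x: "x \<in> Tdeg \<phi> \<gamma> k a" and y: "y \<in> Tdeg \<phi> \<gamma> k b"
  shows "x * y \<in> Tdeg \<phi> \<gamma> k (a + b)"
  using x y unfolding Tdeg_def
proof (rule span_mult[OF hom])
  interpret S: module "\<lambda>r t. \<phi> r * t" by (rule modSc[OF hom])
  fix u v assume u: "u \<in> monomials_le \<gamma> k a" and v: "v \<in> monomials_le \<gamma> k b"
  then obtain \<alpha> \<beta> where u': "u = (\<Prod>i<k. \<gamma> i ^ \<alpha> i)" "(\<Sum>i<k. \<alpha> i) \<le> a"
    and v': "v = (\<Prod>i<k. \<gamma> i ^ \<beta> i)" "(\<Sum>i<k. \<beta> i) \<le> b"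
    unfolding monomials_le_def by blast
  have "u * v = (\<Prod>i<k. \<gamma> i ^ (\<alpha> i + \<beta> i))"
    by (simp add: u' v' power_add prod.distrib)
  moreover have "(\<Sum>i<k. \<alpha> i + \<beta> i) \<le> a + b" using u' v' by (simp add: sum.distrib)
  ultimately have "u * v \<in> monomials_le \<gamma> k (a + b)"
    unfolding monomials_le_def by (intro CollectI exI[of _ "\<lambda>i. \<alpha> i + \<beta> i"]) simp
  then show "u * v \<in> S.span (monomials_le \<gamma> k (a + b))" by (rule S.span_base)
qed

lemma Tdeg_mono:
  assumes hom: "ring_hom_fun \<phi>" and "a \<le> b"
  shows "Tdeg \<phi> \<gamma> k a \<subseteq> Tdeg \<phi> \<gamma> k b"
proof -
  interpret S: module "\<lambda>r t. \<phi> r * t" by (rule modSc[OF hom])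
  have "monomials_le \<gamma> k a \<subseteq> monomials_le \<gamma> k b"
    using assms(2) unfolding monomials_le_def by auto
  then show ?thesis unfolding Tdeg_def by (rule S.span_mono)
qed

lemma one_Tdeg:
  assumes hom: "ring_hom_fun \<phi>"
  shows "1 \<in> Tdeg \<phi> \<gamma> k 0"
proof -
  interpret S: module "\<lambda>r t. \<phi> r * t" by (rule modSc[OF hom])
  have "1 \<in> monomials_le \<gamma> k 0"
    unfolding monomials_le_def by (rule CollectI, rule exI[of _ "\<lambda>_. 0"]) simp
  then show ?thesis unfolding Tdeg_def by (rule S.span_base)
qed

lemma pow_Tdeg:
  assumes hom: "ring_hom_fun \<phi>" and x: "x \<in> Tdeg \<phi> \<gamma> k d"
  shows "x ^ m \<in> Tdeg \<phi> \<gamma> k (d * m)"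
proof (induction m)
  case 0 then show ?case using one_Tdeg[OF hom] by simp
next
  case (Suc m)
  from Tdeg_mult[OF hom x Suc] show ?case by (simp add: add.commute)
qed

lemma prod_Tdeg:
  assumes hom: "ring_hom_fun \<phi>" and fin: "finite I" and x: "\<And>i. i \<in> I \<Longrightarrow> x i \<in> Tdeg \<phi> \<gamma> k d"
  shows "(\<Prod>i\<in>I. x i ^ \<beta> i) \<in> Tdeg \<phi> \<gamma> k (d * (\<Sum>i\<in>I. \<beta> i))"
  using fin x
proof (induction I rule: finite_induct)
  case empty then show ?case using one_Tdeg[OF hom] by simp
next
  case (insert j I)
  have "x j ^ \<beta> j * (\<Prod>i\<in>I. x i ^ \<beta> i) \<in> Tdeg \<phi> \<gamma> k (d * \<beta> j + d * (\<Sum>i\<in>I. \<beta> i))"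
    by (intro Tdeg_mult[OF hom] pow_Tdeg[OF hom] insert) auto
  then show ?case using insert by (simp add: distrib_left)
qed

lemma Tdeg_sub:
  assumes hom: "ring_hom_fun \<phi>" and gen: "generates_algebra \<phi> \<gamma> k"
  shows "\<exists>d\<ge>1. \<forall>n. Tdeg \<phi> \<delta> k' n \<subseteq> Tdeg \<phi> \<gamma> k (d * n)"
proof -
  interpret S: module "\<lambda>r t. \<phi> r * t" by (rule modSc[OF hom])
  have "\<forall>i. \<exists>m. \<delta> i \<in> Tdeg \<phi> \<gamma> k m" using gen unfolding generates_algebra_def by blast
  then obtain f where f: "\<And>i. \<delta> i \<in> Tdeg \<phi> \<gamma> k (f i)" by metis
  define d where "d = (\<Sum>i<k'. f i) + 1"
  have di: "\<delta> i \<in> Tdeg \<phi> \<gamma> k d" if "i < k'" for i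
  proof -
    have "f i \<le> (\<Sum>i<k'. f i)" using that by (intro member_le_sum) auto
    then have "f i \<le> d" by (simp add: d_def)
    with f[of i] Tdeg_mono[OF hom] show ?thesis by blast
  qed
  have "Tdeg \<phi> \<delta> k' n \<subseteq> Tdeg \<phi> \<gamma> k (d * n)" for n
    unfolding Tdeg_def[of \<phi> \<delta>]
  proof (rule S.span_minimal)
    show "S.subspace (Tdeg \<phi> \<gamma> k (d * n))" unfolding Tdeg_def by simp
    show "monomials_le \<delta> k' n \<subseteq> Tdeg \<phi> \<gamma> k (d * n)"
    proof
      fix u assume "u \<in> monomials_le \<delta> k' n"
      then obtain \<beta> where u: "u = (\<Prod>i<k'. \<delta> i ^ \<beta> i)" "(\<Sum>i<k'. \<beta> i) \<le> n"
        unfolding monomials_le_def by blast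
      have "u \<in> Tdeg \<phi> \<gamma> k (d * (\<Sum>i<k'. \<beta> i))"
        unfolding u(1) by (rule prod_Tdeg[OF hom]) (auto intro: di)
      moreover have "d * (\<Sum>i<k'. \<beta> i) \<le> d * n" using u(2) by simp
      ultimately show "u \<in> Tdeg \<phi> \<gamma> k (d * n)" using Tdeg_mono[OF hom] by blast
    qed
  qed
  moreover have "d \<ge> 1" by (simp add: d_def)
  ultimately show ?thesis by blast
qed

lemma lam_mono:
  assumes len: "length_function \<phi> sm lam" and mR: "module (rscale \<phi> sm)"
    and N: "Rsub \<phi> sm N" and N': "Rsub \<phi> sm N'" and sub: "N' \<subseteq> N"
  shows "lam N' {0} \<le> lam N {0}"
proof -
  interpret R: module "rscale \<phi> sm" by fact
  have z: "Rsub \<phi> sm {0}" unfolding Rsub_def by simp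
  have z': "{0} \<subseteq> N'" using N' unfolding Rsub_def using R.subspace_0 by auto
  have eq: "lam N {0} = lam N N' + lam N' {0}"
    using len N N' z sub z' unfolding length_function_def by blast
  have "0 \<le> lam N N'" using len N N' sub unfolding length_function_def by blast
  then show ?thesis unfolding eq by (simp add: add_increasing)
qed



theorem lemma7p3:
  fixes \<phi> :: "'r::comm_ring_1 \<Rightarrow> 't::comm_ring_1"
    and sm :: "'t \<Rightarrow> 'm::ab_group_add \<Rightarrow> 'm"
    and lam :: "'m set \<Rightarrow> 'm set \<Rightarrow> ereal"
    and M0 :: "'m set"
    and \<gamma> \<delta> :: "nat \<Rightarrow> 't" and k k' :: nat
    and p q :: "real poly"
  assumes noeth: "noetherian_ring TYPE('r)"
    and alg: "ring_hom_fun \<phi>"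
    and modT: "module sm"
    and len: "length_function \<phi> sm lam"
    and M0_sub: "Rsub \<phi> sm M0"
    and M0_fg: "\<exists>F. finite F \<and> M0 = Rspan \<phi> sm F"
    and M0_fin: "lam M0 {0} < \<infinity>"
    and TM0: "module.span sm M0 = UNIV"
    and gen_\<gamma>: "generates_algebra \<phi> \<gamma> k"
    and gen_\<delta>: "generates_algebra \<phi> \<delta> k'"
    and hilb_\<gamma>: "eventually (\<lambda>n. lam (TnM0 \<phi> sm \<gamma> k M0 n) {0} = ereal (poly p (real n))) sequentially"
    and hilb_\<delta>: "eventually (\<lambda>n. lam (TnM0 \<phi> sm \<delta> k' M0 n) {0} = ereal (poly q (real n))) sequentially"
  shows "degree p = degree q"
  proof -
  interpret R: module "rscale \<phi> sm" by (rule modR[OF alg modT])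
  obtain d where d: "d \<ge> 1" "\<And>n. Tdeg \<phi> \<delta> k' n \<subseteq> Tdeg \<phi> \<gamma> k (d * n)"
    using Tdeg_sub[OF alg gen_\<gamma>] by blast
  obtain e where e: "e \<ge> 1" "\<And>n. Tdeg \<phi> \<gamma> k n \<subseteq> Tdeg \<phi> \<delta> k' (e * n)"
    using Tdeg_sub[OF alg gen_\<delta>] by blast
  have Rs: "Rsub \<phi> sm (TnM0 \<phi> sm g kk M0 n)" for g kk n
    unfolding Rsub_def TnM0_def Rspan_def by simp
  have TM: "TnM0 \<phi> sm g kk M0 n \<subseteq> TnM0 \<phi> sm g' kk' M0 m"
    if "Tdeg \<phi> g kk n \<subseteq> Tdeg \<phi> g' kk' m" for g g' kk kk' n m
    unfolding TnM0_def Rspan_def by (rule R.span_mono) (use that in blast)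
  have nonneg: "0 \<le> lam (TnM0 \<phi> sm g kk M0 n) {0}" for g kk n
  proof -
    have z: "Rsub \<phi> sm {0}" unfolding Rsub_def by simp
    have "{0} \<subseteq> TnM0 \<phi> sm g kk M0 n" using Rs[of g kk n] R.subspace_0 unfolding Rsub_def by auto
    then show ?thesis using len Rs[of g kk n] z unfolding length_function_def by blast
  qed
  have mono: "lam (TnM0 \<phi> sm g kk M0 n) {0} \<le> lam (TnM0 \<phi> sm g' kk' M0 m) {0}"
    if "Tdeg \<phi> g kk n \<subseteq> Tdeg \<phi> g' kk' m" for g g' kk kk' n m
    by (rule lam_mono[OF len modR[OF alg modT] Rs Rs TM[OF that]])
  obtain N1 where N1: "\<And>n. n \<ge> N1 \<Longrightarrow> lam (TnM0 \<phi> sm \<gamma> k M0 n) {0} = ereal (poly p (real n))"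
    using hilb_\<gamma> unfolding eventually_sequentially by blast
  obtain N2 where N2: "\<And>n. n \<ge> N2 \<Longrightarrow> lam (TnM0 \<phi> sm \<delta> k' M0 n) {0} = ereal (poly q (real n))"
    using hilb_\<delta> unfolding eventually_sequentially by blast
  have "degree q \<le> degree p"
  proof (rule deg_le_poly[OF d(1)])
    show "eventually (\<lambda>n. 0 \<le> poly q (real n) \<and> poly q (real n) \<le> poly p (real (d*n))) sequentially"
      unfolding eventually_sequentially
    proof (intro exI allI impI)
      fix n assume n: "max N1 N2 \<le> n"
      have dn: "d * n \<ge> N1" using n d(1) by (metis max.boundedE mult_le_mono1 mult_1 order_trans)
      have "0 \<le> ereal (poly q (real n))" using nonneg[of \<delta> k' n] N2[of n] n by simp
      moreover have "ereal (poly q (real n)) \<le> ereal (poly p (real (d*n)))"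
        using mono[OF d(2)[of n]] N2[of n] N1[OF dn] n by simp
      ultimately show "0 \<le> poly q (real n) \<and> poly q (real n) \<le> poly p (real (d*n))" by simp
    qed
  qed
  moreover have "degree p \<le> degree q"
  proof (rule deg_le_poly[OF e(1)])
    show "eventually (\<lambda>n. 0 \<le> poly p (real n) \<and> poly p (real n) \<le> poly q (real (e*n))) sequentially"
      unfolding eventually_sequentially
    proof (intro exI allI impI)
      fix n assume n: "max N1 N2 \<le> n"
      have en: "e * n \<ge> N2" using n e(1) by (metis max.boundedE mult_le_mono1 mult_1 order_trans)
      have "0 \<le> ereal (poly p (real n))" using nonneg[of \<gamma> k n] N1[of n] n by simp
      moreover have "ereal (poly p (real n)) \<le> ereal (poly q (real (e*n)))"
        using mono[OF e(2)[of n]] N1[of n] N2[OF en] n by simp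
      ultimately show "0 \<le> poly p (real n) \<and> poly p (real n) \<le> poly q (real (e*n))" by simp
    qed
  qed
  ultimately show ?thesis by simp
qed

end
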